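(* Let $(A,\cdot,\circ)$ be a skew brace and $C$ a sub-skew brace which is a trivial skew brace and a left ideal in $A^{\mathrm{op}}$. Then for all $a\in A$ and $c\in C$, \[ c\circ a\circ\overline{c} \in \big(\lambda^{\mathrm{op}}_c(a)\,c\big)\circ C \quad\text{and}\quad a\circ C = C a. \]
   Context: A skew brace is a set $A$ with two group operations $\cdot$ (often written by juxtaposition) and $\circ$ such that $a\circ(bc) = (a\circ b)\,a^{-1}\,(a\circ c)$ for all $a,b,c\in A$. $a^{-1}$ denotes the inverse of $a$ in $(A,\cdot)$ and $\overline{a}$ its inverse in $(A,\circ)$. Define $\lambda^{\mathrm{op}}_a(b) = (a\circ b)a^{-1}$ (an automorphism of $(A,\cdot)$). A sub-skew brace is a subset that is a subgroup of both groups; it is trivial if $a\circ b=ab$ for all its elements. The opposite skew brace $A^{\mathrm{op}}$ is $A$ with $a\cdot^{\mathrm{op}}b=ba$ and the same $\circ$; a subgroup $I$ of $(A,\cdot)$ is a left ideal in $A^{\mathrm{op}}$ iff $\lambda^{\mathrm{op}}_a(x)\in I$ for all $a\in A$, $x\in I$. $a\circ C=\{a\circ y:y\in C\}$, $Ca=\{ya:y\in C\}$. *)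

theory Defs
  imports "HOL-Algebra.Group"
begin

definition skew_brace :: "('a, 'm) monoid_scheme \<Rightarrow> ('a, 'n) monoid_scheme \<Rightarrow> bool" where
  "skew_brace G H \<longleftrightarrow> group G \<and> group H \<and> carrier H = carrier G \<and>
     (\<forall>a\<in>carrier G. \<forall>b\<in>carrier G. \<forall>c\<in>carrier G.
        a \<otimes>\<^bsub>H\<^esub> (b \<otimes>\<^bsub>G\<^esub> c)
        = (a \<otimes>\<^bsub>H\<^esub> b) \<otimes>\<^bsub>G\<^esub> inv\<^bsub>G\<^esub> a \<otimes>\<^bsub>G\<^esub> (a \<otimes>\<^bsub>H\<^esub> c))"

definition lambda_op :: "('a, 'm) monoid_scheme \<Rightarrow> ('a, 'n) monoid_scheme \<Rightarrow> 'a \<Rightarrow> 'a \<Rightarrow> 'a" where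
  "lambda_op G H a b = (a \<otimes>\<^bsub>H\<^esub> b) \<otimes>\<^bsub>G\<^esub> inv\<^bsub>G\<^esub> a"

definition sub_skew_brace :: "'a set \<Rightarrow> ('a, 'm) monoid_scheme \<Rightarrow> ('a, 'n) monoid_scheme \<Rightarrow> bool" where
  "sub_skew_brace C G H \<longleftrightarrow> subgroup C G \<and> subgroup C H"

definition trivial_on :: "'a set \<Rightarrow> ('a, 'm) monoid_scheme \<Rightarrow> ('a, 'n) monoid_scheme \<Rightarrow> bool" where
  "trivial_on C G H \<longleftrightarrow> (\<forall>x\<in>C. \<forall>y\<in>C. x \<otimes>\<^bsub>H\<^esub> y = x \<otimes>\<^bsub>G\<^esub> y)"

definition left_ideal_op :: "'a set \<Rightarrow> ('a, 'm) monoid_scheme \<Rightarrow> ('a, 'n) monoid_scheme \<Rightarrow> bool" where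
  "left_ideal_op I G H \<longleftrightarrow> subgroup I G \<and>
     (\<forall>a\<in>carrier G. \<forall>x\<in>I. lambda_op G H a x \<in> I)"

end

theory Submission
  imports Defs
begin

lemma sb_one:
  assumes "skew_brace G H"
  shows "\<one>\<^bsub>H\<^esub> = \<one>\<^bsub>G\<^esub>"
proof -
  interpret G: group G using assms unfolding skew_brace_def by blast
  interpret H: group H using assms unfolding skew_brace_def by blast
  have cH: "carrier H = carrier G" using assms unfolding skew_brace_def by blast
  have d: "\<And>a b c. a \<in> carrier G \<Longrightarrow> b \<in> carrier G \<Longrightarrow> c \<in> carrier G \<Longrightarrow>
        a \<otimes>\<^bsub>H\<^esub> (b \<otimes>\<^bsub>G\<^esub> c)
        = (a \<otimes>\<^bsub>H\<^esub> b) \<otimes>\<^bsub>G\<^esub> inv\<^bsub>G\<^esub> a \<otimes>\<^bsub>G\<^esub> (a \<otimes>\<^bsub>H\<^esub> c)"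
    using assms unfolding skew_brace_def by blast
  let ?e = "\<one>\<^bsub>H\<^esub>" let ?u = "\<one>\<^bsub>G\<^esub>"
  have e: "?e \<in> carrier G" using cH by auto
  have x: "?e \<otimes>\<^bsub>H\<^esub> ?u = ?u" using cH by auto
  have "?e \<otimes>\<^bsub>H\<^esub> (?u \<otimes>\<^bsub>G\<^esub> ?u) = ?u \<otimes>\<^bsub>G\<^esub> inv\<^bsub>G\<^esub> ?e \<otimes>\<^bsub>G\<^esub> ?u"
    using d[OF e, of ?u ?u] x by simp
  hence "?u = inv\<^bsub>G\<^esub> ?e" using x e by simp
  thus ?thesis using e by (metis G.inv_inv G.inv_one)
qed

lemma sb_inv:
  assumes "skew_brace G H" "a \<in> carrier G" "b \<in> carrier G"
  shows "a \<otimes>\<^bsub>H\<^esub> inv\<^bsub>G\<^esub> b = a \<otimes>\<^bsub>G\<^esub> inv\<^bsub>G\<^esub> (a \<otimes>\<^bsub>H\<^esub> b) \<otimes>\<^bsub>G\<^esub> a"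
proof -
  interpret G: group G using assms unfolding skew_brace_def by blast
  interpret H: group H using assms unfolding skew_brace_def by blast
  have cH: "carrier H = carrier G" using assms unfolding skew_brace_def by blast
  have d: "\<And>a b c. a \<in> carrier G \<Longrightarrow> b \<in> carrier G \<Longrightarrow> c \<in> carrier G \<Longrightarrow>
        a \<otimes>\<^bsub>H\<^esub> (b \<otimes>\<^bsub>G\<^esub> c)
        = (a \<otimes>\<^bsub>H\<^esub> b) \<otimes>\<^bsub>G\<^esub> inv\<^bsub>G\<^esub> a \<otimes>\<^bsub>G\<^esub> (a \<otimes>\<^bsub>H\<^esub> c)"
    using assms unfolding skew_brace_def by blast
  have o: "\<one>\<^bsub>H\<^esub> = \<one>\<^bsub>G\<^esub>" using sb_one assms by blast
  have ab: "a \<otimes>\<^bsub>H\<^esub> b \<in> carrier G" using cH assms by (metis H.m_closed)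
  have ai: "a \<otimes>\<^bsub>H\<^esub> inv\<^bsub>G\<^esub> b \<in> carrier G" using cH assms by (metis H.m_closed G.inv_closed)
  have "a = a \<otimes>\<^bsub>H\<^esub> (b \<otimes>\<^bsub>G\<^esub> inv\<^bsub>G\<^esub> b)" using o assms cH by simp
  also have "\<dots> = (a \<otimes>\<^bsub>H\<^esub> b) \<otimes>\<^bsub>G\<^esub> inv\<^bsub>G\<^esub> a \<otimes>\<^bsub>G\<^esub> (a \<otimes>\<^bsub>H\<^esub> inv\<^bsub>G\<^esub> b)"
    using d[OF assms(2) assms(3) G.inv_closed[OF assms(3)]] by simp
  finally have eq: "a = (a \<otimes>\<^bsub>H\<^esub> b) \<otimes>\<^bsub>G\<^esub> inv\<^bsub>G\<^esub> a \<otimes>\<^bsub>G\<^esub> (a \<otimes>\<^bsub>H\<^esub> inv\<^bsub>G\<^esub> b)" .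
  hence "inv\<^bsub>G\<^esub> ((a \<otimes>\<^bsub>H\<^esub> b) \<otimes>\<^bsub>G\<^esub> inv\<^bsub>G\<^esub> a) \<otimes>\<^bsub>G\<^esub> a = (a \<otimes>\<^bsub>H\<^esub> inv\<^bsub>G\<^esub> b)"
  proof -
    have p: "(a \<otimes>\<^bsub>H\<^esub> b) \<otimes>\<^bsub>G\<^esub> inv\<^bsub>G\<^esub> a \<in> carrier G" using ab assms by simp
    from G.inv_solve_left[OF ai p assms(2)] show ?thesis using eq by metis
  qed
  thus ?thesis using ab assms by (simp add: G.inv_mult_group G.m_assoc)
qed

lemma sb_act:
  assumes "skew_brace G H" "a \<in> carrier G" "b \<in> carrier G" "x \<in> carrier G"
  shows "lambda_op G H a (lambda_op G H b x) = lambda_op G H (a \<otimes>\<^bsub>H\<^esub> b) x"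
proof -
  interpret G: group G using assms unfolding skew_brace_def by blast
  interpret H: group H using assms unfolding skew_brace_def by blast
  have cH: "carrier H = carrier G" using assms unfolding skew_brace_def by blast
  have d: "\<And>a b c. a \<in> carrier G \<Longrightarrow> b \<in> carrier G \<Longrightarrow> c \<in> carrier G \<Longrightarrow>
        a \<otimes>\<^bsub>H\<^esub> (b \<otimes>\<^bsub>G\<^esub> c)
        = (a \<otimes>\<^bsub>H\<^esub> b) \<otimes>\<^bsub>G\<^esub> inv\<^bsub>G\<^esub> a \<otimes>\<^bsub>G\<^esub> (a \<otimes>\<^bsub>H\<^esub> c)"
    using assms unfolding skew_brace_def by blast
  have bx: "b \<otimes>\<^bsub>H\<^esub> x \<in> carrier G" using cH assms by (metis H.m_closed)
  have ab: "a \<otimes>\<^bsub>H\<^esub> b \<in> carrier G" using cH assms by (metis H.m_closed)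
  have abx: "a \<otimes>\<^bsub>H\<^esub> (b \<otimes>\<^bsub>H\<^esub> x) \<in> carrier G" using cH assms bx by (metis H.m_closed)
  have "lambda_op G H a (lambda_op G H b x)
     = (a \<otimes>\<^bsub>H\<^esub> ((b \<otimes>\<^bsub>H\<^esub> x) \<otimes>\<^bsub>G\<^esub> inv\<^bsub>G\<^esub> b)) \<otimes>\<^bsub>G\<^esub> inv\<^bsub>G\<^esub> a"
    unfolding lambda_op_def ..
  also have "\<dots> = ((a \<otimes>\<^bsub>H\<^esub> (b \<otimes>\<^bsub>H\<^esub> x)) \<otimes>\<^bsub>G\<^esub> inv\<^bsub>G\<^esub> a \<otimes>\<^bsub>G\<^esub>
        (a \<otimes>\<^bsub>G\<^esub> inv\<^bsub>G\<^esub> (a \<otimes>\<^bsub>H\<^esub> b) \<otimes>\<^bsub>G\<^esub> a)) \<otimes>\<^bsub>G\<^esub> inv\<^bsub>G\<^esub> a"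
    using d[OF assms(2) bx, of "inv\<^bsub>G\<^esub> b"] sb_inv[OF assms(1,2,3)] assms by simp
  also have "\<dots> = (a \<otimes>\<^bsub>H\<^esub> (b \<otimes>\<^bsub>H\<^esub> x)) \<otimes>\<^bsub>G\<^esub> inv\<^bsub>G\<^esub> (a \<otimes>\<^bsub>H\<^esub> b)"
    using abx ab assms by (simp add: G.m_assoc[symmetric] ) (simp add: G.m_assoc)
  also have "\<dots> = lambda_op G H (a \<otimes>\<^bsub>H\<^esub> b) x"
    unfolding lambda_op_def using cH assms by (simp add: H.m_assoc)
  finally show ?thesis .
qed

theorem lemma6p3:
  fixes G :: "('a, 'm) monoid_scheme" and H :: "('a, 'n) monoid_scheme" and C :: "'a set"
  assumes "skew_brace G H"
    and "sub_skew_brace C G H"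
    and "trivial_on C G H"
    and "left_ideal_op C G H"
  shows "\<forall>a\<in>carrier G. \<forall>c\<in>C.
           c \<otimes>\<^bsub>H\<^esub> a \<otimes>\<^bsub>H\<^esub> inv\<^bsub>H\<^esub> c
             \<in> (\<lambda>y. (lambda_op G H c a \<otimes>\<^bsub>G\<^esub> c) \<otimes>\<^bsub>H\<^esub> y) ` C
         \<and> (\<lambda>y. a \<otimes>\<^bsub>H\<^esub> y) ` C = (\<lambda>y. y \<otimes>\<^bsub>G\<^esub> a) ` C"
proof (intro ballI conjI)
  interpret G: group G using assms unfolding skew_brace_def by blast
  interpret H: group H using assms unfolding skew_brace_def by blast
  have cH: "carrier H = carrier G" using assms unfolding skew_brace_def by blast
  have sG: "subgroup C G" and sH: "subgroup C H" using assms(2) unfolding sub_skew_brace_def by auto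
  have CG: "C \<subseteq> carrier G" using sG subgroup.subset by blast
  have lid: "\<And>a x. a \<in> carrier G \<Longrightarrow> x \<in> C \<Longrightarrow> lambda_op G H a x \<in> C"
    using assms(4) unfolding left_ideal_op_def by blast
  have o: "\<one>\<^bsub>H\<^esub> = \<one>\<^bsub>G\<^esub>" using sb_one assms by blast
  have bk: "\<And>a z. a \<in> carrier G \<Longrightarrow> z \<in> carrier G \<Longrightarrow> lambda_op G H a z \<otimes>\<^bsub>G\<^esub> a = a \<otimes>\<^bsub>H\<^esub> z"
    unfolding lambda_op_def using cH by (metis G.inv_solve_right G.inv_closed G.m_closed H.m_closed G.m_assoc G.l_inv G.r_one)
  fix a c assume a: "a \<in> carrier G" and c: "c \<in> C"
  have cc: "c \<in> carrier G" using c CG by blast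
  show "c \<otimes>\<^bsub>H\<^esub> a \<otimes>\<^bsub>H\<^esub> inv\<^bsub>H\<^esub> c
             \<in> (\<lambda>y. (lambda_op G H c a \<otimes>\<^bsub>G\<^esub> c) \<otimes>\<^bsub>H\<^esub> y) ` C"
  proof
    show "inv\<^bsub>H\<^esub> c \<in> C" using sH c by (simp add: subgroup.m_inv_closed)
    show "c \<otimes>\<^bsub>H\<^esub> a \<otimes>\<^bsub>H\<^esub> inv\<^bsub>H\<^esub> c = (lambda_op G H c a \<otimes>\<^bsub>G\<^esub> c) \<otimes>\<^bsub>H\<^esub> inv\<^bsub>H\<^esub> c"
      using bk[OF cc a] by simp
  qed
  show "(\<lambda>y. a \<otimes>\<^bsub>H\<^esub> y) ` C = (\<lambda>y. y \<otimes>\<^bsub>G\<^esub> a) ` C"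
  proof
    show "(\<lambda>y. a \<otimes>\<^bsub>H\<^esub> y) ` C \<subseteq> (\<lambda>y. y \<otimes>\<^bsub>G\<^esub> a) ` C"
    proof
      fix w assume "w \<in> (\<lambda>y. a \<otimes>\<^bsub>H\<^esub> y) ` C"
      then obtain y where y: "y \<in> C" "w = a \<otimes>\<^bsub>H\<^esub> y" by blast
      show "w \<in> (\<lambda>y. y \<otimes>\<^bsub>G\<^esub> a) ` C"
      proof (rule image_eqI)
        show "w = lambda_op G H a y \<otimes>\<^bsub>G\<^esub> a" using bk[OF a, of y] y CG by auto
      qed (rule lid[OF a y(1)])
    qed
    show "(\<lambda>y. y \<otimes>\<^bsub>G\<^esub> a) ` C \<subseteq> (\<lambda>y. a \<otimes>\<^bsub>H\<^esub> y) ` C"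
    proof
      fix w assume "w \<in> (\<lambda>y. y \<otimes>\<^bsub>G\<^esub> a) ` C"
      then obtain y where y: "y \<in> C" "w = y \<otimes>\<^bsub>G\<^esub> a" by blast
      have ia: "inv\<^bsub>H\<^esub> a \<in> carrier G" using a cH by (metis H.inv_closed)
      define z where "z = lambda_op G H (inv\<^bsub>H\<^esub> a) y"
      have z: "z \<in> C" unfolding z_def using lid[OF ia y(1)] .
      have "lambda_op G H a z = lambda_op G H (a \<otimes>\<^bsub>H\<^esub> inv\<^bsub>H\<^esub> a) y"
        unfolding z_def using sb_act[OF assms(1) a ia] y CG by blast
      also have "\<dots> = y" 
      proof -
        have yc: "y \<in> carrier G" using y CG by blast
        have "a \<otimes>\<^bsub>H\<^esub> inv\<^bsub>H\<^esub> a = \<one>\<^bsub>G\<^esub>" using a cH o by simp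
        moreover have "\<one>\<^bsub>G\<^esub> \<otimes>\<^bsub>H\<^esub> y = y" using yc cH o[symmetric] by simp
        ultimately show ?thesis unfolding lambda_op_def using yc by simp
      qed
      finally have "w = a \<otimes>\<^bsub>H\<^esub> z" using bk[OF a, of z] z CG y by auto
      thus "w \<in> (\<lambda>y. a \<otimes>\<^bsub>H\<^esub> y) ` C" using z by blast
    qed
  qed
qed

end
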